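(* Let $\mathtt{L}\in\mathcal{L}$ be a line of $\mathbb{S}$ and let $\alpha\in P\cup P'$. If $\alpha$ has distance $2$ (in $\mathbb{S}$) from two points of $\mathtt{L}$, then $\alpha$ is collinear in $\mathbb{S}$ with the third point of $\mathtt{L}$.
   Context: Let $S=(P,L)$ and $S'=(P',L')$ be generalized quadrangles of order $(2,2)$ (every line has 3 points, every point lies on 3 lines, and for each point $x$ and line $l\not\ni x$ exactly one point of $l$ is collinear with $x$), with an isomorphism $x\mapsto x'$ from $S$ to $S'$. In a point-line geometry, $x^{\perp}$ is $x$ together with all points collinear with $x$, and $A^{\perp}=\bigcap_{a\in A}a^{\perp}$. A triad is a set of three pairwise non-collinear points, complete if $|T^{\perp}|=3$. Let $\mathcal{P}=\{(x,y')\in P\times P':y'\in x'^{\perp}\}$ and $\mathcal{L}$ the set of all $3$-subsets $\{(x,u'),(y,v'),(z,w')\}$ of $\mathcal{P}$ where $T=\{x,y,z\}$ (three distinct points) is a line or complete triad of $S$ and $\{u',v',w'\}=T'^{\perp}$ in $S'$ with $u',v',w'$ distinct. The geometry $\mathbb{S}=(\mathbb{P},\mathbb{L})$ has point set $\mathbb{P}=\mathcal{P}\cup P\cup P'$ (disjoint union) and line set $\mathcal{L}\cup\{\{x,(x,u'),u'\}:(x,u')\in\mathcal{P}\}$. Distances are in the collinearity graph of $\mathbb{S}$. *)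

theory Defs
  imports Main
begin

definition collinear :: "'a set set \<Rightarrow> 'a \<Rightarrow> 'a \<Rightarrow> bool" where
  "collinear L x y \<longleftrightarrow> x \<noteq> y \<and> (\<exists>l\<in>L. x \<in> l \<and> y \<in> l)"

definition perp :: "'a set \<Rightarrow> 'a set set \<Rightarrow> 'a \<Rightarrow> 'a set" where
  "perp P L x = {x} \<union> {y\<in>P. collinear L x y}"

definition perp_set :: "'a set \<Rightarrow> 'a set set \<Rightarrow> 'a set \<Rightarrow> 'a set" where
  "perp_set P L A = {y\<in>P. \<forall>a\<in>A. y \<in> perp P L a}"

definition GQ22 :: "'a set \<Rightarrow> 'a set set \<Rightarrow> bool" where
  "GQ22 P L \<longleftrightarrow>
     (\<forall>l\<in>L. l \<subseteq> P \<and> card l = 3) \<and>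
     (\<forall>x\<in>P. card {l\<in>L. x \<in> l} = 3) \<and>
     (\<forall>x\<in>P. \<forall>y\<in>P. x \<noteq> y \<longrightarrow> card {l\<in>L. x \<in> l \<and> y \<in> l} \<le> 1) \<and>
     (\<forall>x\<in>P. \<forall>l\<in>L. x \<notin> l \<longrightarrow> (\<exists>!y. y \<in> l \<and> collinear L x y))"

definition is_triad :: "'a set \<Rightarrow> 'a set set \<Rightarrow> 'a set \<Rightarrow> bool" where
  "is_triad P L T \<longleftrightarrow> T \<subseteq> P \<and> card T = 3 \<and>
     (\<forall>x\<in>T. \<forall>y\<in>T. \<not> collinear L x y)"

definition complete_triad :: "'a set \<Rightarrow> 'a set set \<Rightarrow> 'a set \<Rightarrow> bool" where
  "complete_triad P L T \<longleftrightarrow> is_triad P L T \<and> card (perp_set P L T) = 3"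

definition GQ_iso :: "'a set \<Rightarrow> 'a set set \<Rightarrow> 'b set \<Rightarrow> 'b set set \<Rightarrow> ('a \<Rightarrow> 'b) \<Rightarrow> bool" where
  "GQ_iso P L P' L' f \<longleftrightarrow> bij_betw f P P' \<and> (\<lambda>l. f ` l) ` L = L'"

(* points of the geometry \<bbbS>: disjoint union of \<P>, P and P' *)
datatype ('a, 'b) bpt = PP 'a 'b | Pt 'a | Pt' 'b

definition calP :: "'a set \<Rightarrow> 'a set set \<Rightarrow> 'b set \<Rightarrow> 'b set set \<Rightarrow> ('a \<Rightarrow> 'b) \<Rightarrow> ('a \<times> 'b) set" where
  "calP P L P' L' f = {(x, y). x \<in> P \<and> y \<in> perp P' L' (f x)}"

definition calL :: "'a set \<Rightarrow> 'a set set \<Rightarrow> 'b set \<Rightarrow> 'b set set \<Rightarrow> ('a \<Rightarrow> 'b) \<Rightarrow> ('a, 'b) bpt set set" where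
  "calL P L P' L' f = {{PP x u, PP y v, PP z w} | x y z u v w.
      (x, u) \<in> calP P L P' L' f \<and> (y, v) \<in> calP P L P' L' f \<and> (z, w) \<in> calP P L P' L' f \<and>
      x \<noteq> y \<and> x \<noteq> z \<and> y \<noteq> z \<and>
      ({x, y, z} \<in> L \<or> complete_triad P L {x, y, z}) \<and>
      u \<noteq> v \<and> u \<noteq> w \<and> v \<noteq> w \<and>
      {u, v, w} = perp_set P' L' (f ` {x, y, z})}"

definition bbP :: "'a set \<Rightarrow> 'a set set \<Rightarrow> 'b set \<Rightarrow> 'b set set \<Rightarrow> ('a \<Rightarrow> 'b) \<Rightarrow> ('a, 'b) bpt set" where
  "bbP P L P' L' f = (\<lambda>(x, y). PP x y) ` calP P L P' L' f \<union> Pt ` P \<union> Pt' ` P'"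

definition bbL :: "'a set \<Rightarrow> 'a set set \<Rightarrow> 'b set \<Rightarrow> 'b set set \<Rightarrow> ('a \<Rightarrow> 'b) \<Rightarrow> ('a, 'b) bpt set set" where
  "bbL P L P' L' f = calL P L P' L' f \<union>
     {{Pt x, PP x u, Pt' u} | x u. (x, u) \<in> calP P L P' L' f}"

definition dist2 :: "'c set set \<Rightarrow> 'c \<Rightarrow> 'c \<Rightarrow> bool" where
  "dist2 LL a b \<longleftrightarrow> a \<noteq> b \<and> \<not> collinear LL a b \<and>
     (\<exists>c. collinear LL a c \<and> collinear LL c b)"

end

theory Submission
  imports Defs
begin

lemma coll_sym: "collinear L x y = collinear L y x"
  unfolding collinear_def by blast

lemma perp_iff: "y \<in> perp P L x \<longleftrightarrow> y = x \<or> (y \<in> P \<and> collinear L x y)"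
  unfolding perp_def by auto

lemma perp_set2: "y \<in> perp_set P L {p,q} \<longleftrightarrow> y \<in> P \<and> y \<in> perp P L p \<and> y \<in> perp P L q"
  unfolding perp_set_def by auto

lemma GQ_line: "GQ22 P L \<Longrightarrow> l \<in> L \<Longrightarrow> card l = 3"
  by (simp add: GQ22_def)
lemma GQ_pt: "GQ22 P L \<Longrightarrow> x \<in> P \<Longrightarrow> card {l\<in>L. x \<in> l} = 3"
  by (simp add: GQ22_def)
lemma GQ_ax: "GQ22 P L \<Longrightarrow> x \<in> P \<Longrightarrow> l \<in> L \<Longrightarrow> x \<notin> l \<Longrightarrow> \<exists>!y. y \<in> l \<and> collinear L x y"
  by (simp add: GQ22_def)

lemma GQ_bound:
  assumes G: "GQ22 P L" and pq: "p \<in> P" "q \<in> P" "p \<noteq> q"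
  shows "finite (perp_set P L {p,q}) \<and> card (perp_set P L {p,q}) \<le> 3"
proof (cases "collinear L p q")
  case True
  then obtain l where l: "l \<in> L" "p \<in> l" "q \<in> l" unfolding collinear_def by blast
  have cl: "card l = 3" using GQ_line[OF G l(1)] .
  have uq: "\<And>x. x \<in> P \<Longrightarrow> x \<notin> l \<Longrightarrow> \<exists>!y. y \<in> l \<and> collinear L x y"
    using GQ_ax[OF G _ l(1)] by blast
  have sub: "perp_set P L {p,q} \<subseteq> l"
  proof
    fix r assume r: "r \<in> perp_set P L {p,q}"
    show "r \<in> l"
    proof (rule ccontr)
      assume rl: "r \<notin> l"
      hence "r \<noteq> p" "r \<noteq> q" using l by auto
      with r have "r \<in> P" "collinear L r p" "collinear L r q"
        unfolding perp_set2 perp_iff using coll_sym by metis+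
      then show False using uq[OF \<open>r\<in>P\<close> rl] l pq(3) by blast
    qed
  qed
  have "finite l" using cl by (metis card.infinite zero_neq_numeral)
  then show ?thesis using cl sub card_mono finite_subset by metis
next
  case False
  define g where "g r = (SOME m. m \<in> L \<and> p \<in> m \<and> r \<in> m)" for r
  let ?Q = "perp_set P L {p,q}"
  have colp: "collinear L p r" and colq: "collinear L q r" if "r \<in> ?Q" for r
  proof -
    have "r \<noteq> q" using that False pq(3) unfolding perp_set2 perp_iff by metis
    moreover have "r \<noteq> p" using that False pq(3) coll_sym unfolding perp_set2 perp_iff by metis
    ultimately show "collinear L p r" "collinear L q r" using that unfolding perp_set2 perp_iff by auto
  qed
  have gin: "g r \<in> L \<and> p \<in> g r \<and> r \<in> g r" if "r \<in> ?Q" for r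
    using colp[OF that] unfolding g_def collinear_def by (metis (mono_tags, lifting) someI_ex)
  have inj: "inj_on g ?Q"
  proof (rule inj_onI)
    fix r1 r2 assume r: "r1 \<in> ?Q" "r2 \<in> ?Q" "g r1 = g r2"
    have qm: "q \<notin> g r1" using gin[OF r(1)] False pq(3) unfolding collinear_def by blast
    have "g r1 \<in> L" using gin[OF r(1)] by blast
    then have "\<exists>!y. y \<in> g r1 \<and> collinear L q y" using GQ_ax[OF G pq(2) _ qm] by blast
    then show "r1 = r2" using gin r colq by metis
  qed
  have im: "g ` ?Q \<subseteq> {m\<in>L. p \<in> m}" using gin by blast
  have c3: "card {m\<in>L. p \<in> m} = 3" using GQ_pt[OF G pq(1)] .
  then have fin: "finite {m\<in>L. p \<in> m}" by (metis card.infinite zero_neq_numeral)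
  then have "finite (g ` ?Q)" using im finite_subset by blast
  then have "finite ?Q" using inj finite_imageD by blast
  moreover have "card ?Q \<le> 3" using card_inj_on_le[OF inj im fin] c3 by simp
  ultimately show ?thesis by blast
qed

lemma calL_pts:
  assumes "Ln \<in> calL P L P' L' f" "p1 \<in> Ln" "p2 \<in> Ln" "p3 \<in> Ln"
    "p1\<noteq>p2" "p1\<noteq>p3" "p2\<noteq>p3"
  shows "\<exists>a1 a2 a3 b1 b2 b3. p1 = PP a1 b1 \<and> p2 = PP a2 b2 \<and> p3 = PP a3 b3 \<and>
     a1\<noteq>a2 \<and> a1\<noteq>a3 \<and> a2\<noteq>a3 \<and> b1\<noteq>b2 \<and> b1\<noteq>b3 \<and> b2\<noteq>b3 \<and>
     a1\<in>P \<and> a2\<in>P \<and> a3\<in>P \<and> {b1,b2,b3} = perp_set P' L' (f ` {a1,a2,a3})"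
proof -
  obtain x y z u v w where Ln: "Ln = {PP x u, PP y v, PP z w}"
    and c: "(x, u) \<in> calP P L P' L' f" "(y, v) \<in> calP P L P' L' f" "(z, w) \<in> calP P L P' L' f"
    "x \<noteq> y" "x \<noteq> z" "y \<noteq> z" "u \<noteq> v" "u \<noteq> w" "v \<noteq> w"
    and pe: "{u, v, w} = perp_set P' L' (f ` {x, y, z})"
    using assms(1) unfolding calL_def by blast
  have P: "x \<in> P" "y \<in> P" "z \<in> P" using c(1-3) unfolding calP_def by auto
  have s1: "{v,u,w} = perp_set P' L' (f ` {y,x,z})" "{w,v,u} = perp_set P' L' (f ` {z,y,x})"
     "{u,w,v} = perp_set P' L' (f ` {x,z,y})" "{v,w,u} = perp_set P' L' (f ` {y,z,x})"
     "{w,u,v} = perp_set P' L' (f ` {z,x,y})"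
    using pe by (simp_all only: insert_commute)
  have "p1 = PP x u \<or> p1 = PP y v \<or> p1 = PP z w" "p2 = PP x u \<or> p2 = PP y v \<or> p2 = PP z w"
    "p3 = PP x u \<or> p3 = PP y v \<or> p3 = PP z w" using assms(2-4) Ln by auto
  then show ?thesis using assms(5-7) c(4-) P pe s1
    by (elim disjE) (blast+)
qed

lemma calL_perp:
  assumes "m \<in> calL P L P' L' f" "PP p q \<in> m" "PP p' q' \<in> m"
  shows "q \<in> perp P' L' (f p')"
proof -
  obtain x y z u v w where Ln: "m = {PP x u, PP y v, PP z w}"
    and c: "{u, v, w} = perp_set P' L' (f ` {x, y, z})"
    using assms(1) unfolding calL_def by blast
  have "q \<in> {u,v,w}" "p' \<in> {x,y,z}" using assms(2,3) Ln by auto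
  then show ?thesis using c unfolding perp_set_def by auto
qed

lemma calL_noPt: "m \<in> calL P L P' L' f \<Longrightarrow> Pt a \<notin> m \<and> Pt' b \<notin> m"
  unfolding calL_def by auto

lemma bbL_cases:
  "m \<in> bbL P L P' L' f \<Longrightarrow> m \<in> calL P L P' L' f \<or>
     (\<exists>x u. (x, u) \<in> calP P L P' L' f \<and> m = {Pt x, PP x u, Pt' u})"
  unfolding bbL_def by blast

lemma triple_in: "(x, u) \<in> calP P L P' L' f \<Longrightarrow> {Pt x, PP x u, Pt' u} \<in> bbL P L P' L' f"
  unfolding bbL_def by blast

lemma keyA:
  assumes "collinear (bbL P L P' L' f) (Pt a) c" "collinear (bbL P L P' L' f) c (PP x u)"
  shows "u \<in> perp P' L' (f a)"
proof -
  obtain m where m: "m \<in> bbL P L P' L' f" "Pt a \<in> m" "c \<in> m" "Pt a \<noteq> c"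
    using assms(1) unfolding collinear_def by blast
  obtain m2 where m2: "m2 \<in> bbL P L P' L' f" "c \<in> m2" "PP x u \<in> m2" "c \<noteq> PP x u"
    using assms(2) unfolding collinear_def by blast
  obtain t where t: "(a, t) \<in> calP P L P' L' f" "m = {Pt a, PP a t, Pt' t}"
    using bbL_cases[OF m(1)] calL_noPt m(2) by fastforce
  have cc: "c = PP a t \<or> c = Pt' t" using m t by auto
  show ?thesis
  proof (cases "m2 \<in> calL P L P' L' f")
    case True
    then have "c = PP a t" using cc calL_noPt m2(2) by metis
    then show ?thesis using calL_perp[OF True m2(3)] m2(2) by blast
  next
    case False
    then obtain s' t' where st: "m2 = {Pt s', PP s' t', Pt' t'}" using bbL_cases[OF m2(1)] by blast
    then have "PP x u = PP s' t'" using m2(3) by auto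
    then have "c = Pt' t" using cc m2(2,4) st by auto
    then have "t' = t" "u = t" using m2(2) st \<open>PP x u = PP s' t'\<close> by auto
    then show ?thesis using t(1) unfolding calP_def by auto
  qed
qed

lemma keyB:
  assumes "collinear (bbL P L P' L' f) (Pt' b) c" "collinear (bbL P L P' L' f) c (PP x u)"
  shows "b \<in> perp P' L' (f x)"
proof -
  obtain m where m: "m \<in> bbL P L P' L' f" "Pt' b \<in> m" "c \<in> m" "Pt' b \<noteq> c"
    using assms(1) unfolding collinear_def by blast
  obtain m2 where m2: "m2 \<in> bbL P L P' L' f" "c \<in> m2" "PP x u \<in> m2" "c \<noteq> PP x u"
    using assms(2) unfolding collinear_def by blast
  obtain s where t: "(s, b) \<in> calP P L P' L' f" "m = {Pt s, PP s b, Pt' b}"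
    using bbL_cases[OF m(1)] calL_noPt m(2) by fastforce
  have cc: "c = PP s b \<or> c = Pt s" using m t by auto
  show ?thesis
  proof (cases "m2 \<in> calL P L P' L' f")
    case True
    then have "c = PP s b" using cc calL_noPt m2(2) by metis
    then show ?thesis using calL_perp[OF True _ m2(3)] m2(2) by blast
  next
    case False
    then obtain s' t' where st: "m2 = {Pt s', PP s' t', Pt' t'}" using bbL_cases[OF m2(1)] by blast
    then have "PP x u = PP s' t'" using m2(3) by auto
    then have "c = Pt s" using cc m2(2,4) st by auto
    then have "s' = s" "x = s" using m2(2) st \<open>PP x u = PP s' t'\<close> by auto
    then show ?thesis using t(1) unfolding calP_def by auto
  qed
qed

theorem proposition4p7:
  fixes P :: "'a set" and L :: "'a set set"
    and P' :: "'b set" and L' :: "'b set set" and f :: "'a \<Rightarrow> 'b"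
    and Ln :: "('a, 'b) bpt set" and \<alpha> p1 p2 p3 :: "('a, 'b) bpt"
  assumes "GQ22 P L" and "GQ22 P' L'" and "GQ_iso P L P' L' f"
    and "Ln \<in> calL P L P' L' f"
    and "\<alpha> \<in> Pt ` P \<union> Pt' ` P'"
    and "p1 \<in> Ln" and "p2 \<in> Ln" and "p3 \<in> Ln"
    and "p1 \<noteq> p2" and "p1 \<noteq> p3" and "p2 \<noteq> p3"
    and "dist2 (bbL P L P' L' f) \<alpha> p1" and "dist2 (bbL P L P' L' f) \<alpha> p2"
  shows "collinear (bbL P L P' L' f) \<alpha> p3"
proof -
  let ?LL = "bbL P L P' L' f"
  obtain a1 a2 a3 b1 b2 b3 where p: "p1 = PP a1 b1" "p2 = PP a2 b2" "p3 = PP a3 b3"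
    and d: "a1\<noteq>a2" "a1\<noteq>a3" "a2\<noteq>a3" "b1\<noteq>b2" "b1\<noteq>b3" "b2\<noteq>b3"
    and aP: "a1\<in>P" "a2\<in>P" "a3\<in>P" and pe: "{b1,b2,b3} = perp_set P' L' (f ` {a1,a2,a3})"
    using calL_pts[OF assms(4,6,7,8,9,10,11)] by blast
  have bij: "bij_betw f P P'" using assms(3) unfolding GQ_iso_def by blast
  then have inj: "inj_on f P" and fP: "\<And>x. x \<in> P \<Longrightarrow> f x \<in> P'"
    by (auto simp: bij_betw_def)
  have bperp: "b \<in> perp P' L' (f a)" if "b \<in> {b1,b2,b3}" "a \<in> {a1,a2,a3}" for a b
    using that pe unfolding perp_set_def by blast
  have bP: "b \<in> P'" if "b \<in> {b1,b2,b3}" for b using that pe unfolding perp_set_def by blast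
  have sym: "y \<in> perp P' L' x" if "x \<in> perp P' L' y" "x \<in> P'" "y \<in> P'" for x y
    using that coll_sym unfolding perp_iff by metis
  have calP: "(a, b) \<in> calP P L P' L' f" if "a \<in> P" "b \<in> perp P' L' (f a)" for a b
    using that unfolding calP_def by auto
  have colA: "collinear ?LL (Pt a) (PP a b)" if "(a, b) \<in> calP P L P' L' f" for a b
    unfolding collinear_def by (rule conjI, simp, rule bexI[OF _ triple_in[OF that]], simp)
  have colB: "collinear ?LL (Pt' b) (PP a b)" if "(a, b) \<in> calP P L P' L' f" for a b
    unfolding collinear_def by (rule conjI, simp, rule bexI[OF _ triple_in[OF that]], simp)
  from assms(5) show ?thesis
  proof
    assume "\<alpha> \<in> Pt ` P"
    then obtain a where a: "\<alpha> = Pt a" "a \<in> P" by blast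
    obtain c1 where c1: "collinear ?LL \<alpha> c1" "collinear ?LL c1 p1"
      using assms(12) unfolding dist2_def by blast
    obtain c2 where c2: "collinear ?LL \<alpha> c2" "collinear ?LL c2 p2"
      using assms(13) unfolding dist2_def by blast
    have h1: "b1 \<in> perp P' L' (f a)" using keyA c1 a p by metis
    have h2: "b2 \<in> perp P' L' (f a)" using keyA c2 a p by metis
    let ?Q = "perp_set P' L' {b1,b2}"
    have b1P: "b1 \<in> P'" and b2P: "b2 \<in> P'" using bP by auto
    have fQ: "finite ?Q \<and> card ?Q \<le> 3" using GQ_bound[OF assms(2) b1P b2P d(4)] .
    have inQ: "f a \<in> ?Q" unfolding perp_set2
      using sym[OF h1 b1P fP[OF a(2)]] sym[OF h2 b2P fP[OF a(2)]] fP[OF a(2)] by blast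
    have inQ2': "f a' \<in> ?Q" if "a' \<in> {a1,a2,a3}" for a'
    proof -
      have a'P: "a' \<in> P" using that aP by auto
      have "b1 \<in> perp P' L' (f a')" "b2 \<in> perp P' L' (f a')" using bperp that by auto
      then show ?thesis unfolding perp_set2
        using sym[OF _ b1P fP[OF a'P]] sym[OF _ b2P fP[OF a'P]] fP[OF a'P] by blast
    qed
    have inQ2: "f ` {a1,a2,a3} \<subseteq> ?Q" using inQ2' by blast
    have "card (f ` {a1,a2,a3}) = 3"
    proof -
      have "f a1 \<noteq> f a2" "f a1 \<noteq> f a3" "f a2 \<noteq> f a3" using inj aP d by (metis inj_on_def)+
      then show ?thesis by simp
    qed
    then have "f ` {a1,a2,a3} = ?Q" using inQ2 fQ by (metis card_seteq)
    then have "f a \<in> f ` {a1,a2,a3}" using inQ by blast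
    then have "a \<in> {a1,a2,a3}" using inj aP a(2) by (auto simp: inj_on_def)
    moreover have "a \<noteq> a1"
    proof
      assume "a = a1"
      then have "collinear ?LL \<alpha> p1" using colA[OF calP] a p bperp aP by auto
      then show False using assms(12) unfolding dist2_def by blast
    qed
    moreover have "a \<noteq> a2"
    proof
      assume "a = a2"
      then have "collinear ?LL \<alpha> p2" using colA[OF calP] a p bperp aP by auto
      then show False using assms(13) unfolding dist2_def by blast
    qed
    ultimately have "a = a3" by blast
    then show ?thesis using colA[OF calP] a p bperp aP by auto
  next
    assume "\<alpha> \<in> Pt' ` P'"
    then obtain b where b: "\<alpha> = Pt' b" "b \<in> P'" by blast
    obtain c1 where c1: "collinear ?LL \<alpha> c1" "collinear ?LL c1 p1"
      using assms(12) unfolding dist2_def by blast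
    obtain c2 where c2: "collinear ?LL \<alpha> c2" "collinear ?LL c2 p2"
      using assms(13) unfolding dist2_def by blast
    have h1: "b \<in> perp P' L' (f a1)" using keyB c1 b p by metis
    have h2: "b \<in> perp P' L' (f a2)" using keyB c2 b p by metis
    let ?Q = "perp_set P' L' {f a1, f a2}"
    have ne: "f a1 \<noteq> f a2" using inj aP d by (metis inj_on_def)
    have fQ: "finite ?Q \<and> card ?Q \<le> 3" using GQ_bound[OF assms(2) fP[OF aP(1)] fP[OF aP(2)] ne] .
    have inQ: "b \<in> ?Q" using h1 h2 b(2) unfolding perp_set2 by blast
    have inQ2': "b' \<in> ?Q" if "b' \<in> {b1,b2,b3}" for b'
    proof -
      have "b' \<in> perp P' L' (f a1)" "b' \<in> perp P' L' (f a2)" "b' \<in> P'"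
        using bperp[OF that] bP[OF that] by auto
      then show ?thesis unfolding perp_set2 by blast
    qed
    have inQ2: "{b1,b2,b3} \<subseteq> ?Q" using inQ2' by blast
    have "card {b1,b2,b3} = 3" using d by simp
    then have "{b1,b2,b3} = ?Q" using inQ2 fQ by (metis card_seteq)
    then have "b \<in> {b1,b2,b3}" using inQ by blast
    moreover have "b \<noteq> b1"
    proof
      assume "b = b1"
      then have "collinear ?LL \<alpha> p1" using colB[OF calP] b p bperp aP by auto
      then show False using assms(12) unfolding dist2_def by blast
    qed
    moreover have "b \<noteq> b2"
    proof
      assume "b = b2"
      then have "collinear ?LL \<alpha> p2" using colB[OF calP] b p bperp aP by auto
      then show False using assms(13) unfolding dist2_def by blast
    qed
    ultimately have "b = b3" by blast
    then show ?thesis using colB[OF calP] b p bperp aP by auto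
  qed
qed

end
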